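(* Let $P(\mathbb{R})$ be the set of all Borel probability measures on $\mathbb{R}$ and let $\phi\colon P(\mathbb{R})\to P(\mathbb{R})$ be a surjective map with $d_{Ku}(\phi(\mu),\phi(\nu))=d_{Ku}(\mu,\nu)$ for all $\mu,\nu\in P(\mathbb{R})$. Then there exists a homeomorphism $g\colon\mathbb{R}\to\mathbb{R}$ such that $$\phi(\mu)=\mu\circ g\qquad(\mu\in P(\mathbb{R})).$$ Moreover, every transformation of this form is a surjective isometry of $P(\mathbb{R})$ with respect to the Kuiper distance.
   Context: For Borel probability measures $\mu,\nu$ on $\mathbb{R}$ with distribution functions $f_\mu(t)=\mu((-\infty,t])$, the Kuiper distance is $d_{Ku}(\mu,\nu)=\sup_{t}(f_\mu(t)-f_\nu(t))+\sup_t(f_\nu(t)-f_\mu(t))$, which equals $\sup\{|\mu(I)-\nu(I)|: I\subseteq\mathbb{R}\text{ a non-degenerate interval}\}$. For a homeomorphism $g$ of $\mathbb{R}$, $\mu\circ g$ is the Borel probability measure $(\mu\circ g)(B)=\mu(g(B))$. *)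

theory Defs
  imports "HOL-Probability.Probability"
begin

definition borel_prob_measures :: "real measure set" where
  "borel_prob_measures = {M. sets M = sets borel \<and> prob_space M}"

definition distfun :: "real measure \<Rightarrow> real \<Rightarrow> real" where
  "distfun M t = measure M {..t}"

definition kuiper_dist :: "real measure \<Rightarrow> real measure \<Rightarrow> real" where
  "kuiper_dist M N =
     (SUP t. distfun M t - distfun N t) + (SUP t. distfun N t - distfun M t)"

text \<open>mu o g, i.e. the measure B |-> mu(g(B)), for a homeomorphism g with inverse g'.
  This is the push-forward of mu under g' (preimage of B under g' is g(B)).\<close>
definition comp_homeo :: "real measure \<Rightarrow> (real \<Rightarrow> real) \<Rightarrow> real measure" where
  "comp_homeo M g = distr M borel (inv g)"

end

theory Submission
  imports Defs
begin


abbreviation "PR \<equiv> borel_prob_measures"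

lemma PR_iff: "M \<in> PR \<longleftrightarrow> real_distribution M"
  by (auto simp: borel_prob_measures_def real_distribution_def real_distribution_axioms_def)

lemma distfun_cdf: "distfun M = cdf M"
  by (auto simp: distfun_def cdf_def fun_eq_iff)

definition osc :: "(real \<Rightarrow> real) \<Rightarrow> real" where
  "osc h = (SUP t. h t) + (SUP t. - h t)"

lemma kuiper_osc: "kuiper_dist M N = osc (\<lambda>t. cdf M t - cdf N t)"
  unfolding kuiper_dist_def osc_def distfun_cdf by simp

lemma sup_upper: fixes h :: "real \<Rightarrow> real" assumes "\<And>t. \<bar>h t\<bar> \<le> B" shows "h t \<le> (SUP t. h t)"
  by (rule cSUP_upper) (use assms in \<open>auto intro!: bdd_aboveI2[where M=B] simp: abs_le_iff\<close>)

lemma sup_least: fixes h :: "real \<Rightarrow> real" assumes "\<And>t. h t \<le> c" shows "(SUP t. h t) \<le> (c::real)"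
  by (rule cSUP_least) (use assms in auto)

lemma sup_scale: fixes h :: "real \<Rightarrow> real" assumes "\<And>t. \<bar>h t\<bar> \<le> B" "p \<ge> 0"
  shows "(SUP t. p * h t) = p * (SUP t. h t)"
proof (cases "p = 0")
  case True then show ?thesis by simp
next
  case False
  then have p: "p > 0" using assms by simp
  have bdp: "\<And>t. \<bar>p * h t\<bar> \<le> p * B" using assms p by (simp add: abs_mult mult_left_mono)
  show ?thesis
  proof (rule antisym)
    show "(SUP t. p * h t) \<le> p * (SUP t. h t)"
      by (rule sup_least) (use sup_upper[OF assms(1)] p in \<open>simp add: mult_left_mono\<close>)
    have "(SUP t. h t) \<le> (SUP t. p * h t) / p"
      by (rule sup_least) (use sup_upper[OF bdp] p in \<open>simp add: field_simps\<close>)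
    then show "p * (SUP t. h t) \<le> (SUP t. p * h t)" using p by (simp add: field_simps)
  qed
qed

lemma osc_scale: fixes h :: "real \<Rightarrow> real" assumes "\<And>t. \<bar>h t\<bar> \<le> B" "p \<ge> 0"
  shows "osc (\<lambda>t. p * h t) = p * osc h"
proof -
  have b2: "\<And>t. \<bar>- h t\<bar> \<le> B" using assms by simp
  have "(SUP t. - (p * h t)) = (SUP t. p * (- h t))" by simp
  then show ?thesis unfolding osc_def using sup_scale[OF assms] sup_scale[OF b2 assms(2)]
    by (simp add: algebra_simps del: mult_minus_right)
qed

lemma sup_add_le: fixes h k :: "real \<Rightarrow> real" assumes "\<And>t. \<bar>h t\<bar> \<le> B" "\<And>t. \<bar>k t\<bar> \<le> C"
  shows "(SUP t. h t + k t) \<le> (SUP t. h t) + (SUP t. k t)"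
  by (rule sup_least, rule add_mono, rule sup_upper[OF assms(1)], rule sup_upper[OF assms(2)])

lemma osc_add_le: fixes h k :: "real \<Rightarrow> real" assumes "\<And>t. \<bar>h t\<bar> \<le> B" "\<And>t. \<bar>k t\<bar> \<le> C"
  shows "osc (\<lambda>t. h t + k t) \<le> osc h + osc k"
proof -
  have "(SUP t. - (h t + k t)) = (SUP t. (- h t) + (- k t))" by simp
  also have "\<dots> \<le> (SUP t. - h t) + (SUP t. - k t)"
    by (rule sup_add_le[of _ B _ C]) (use assms in auto)
  moreover have "(SUP t. h t + k t) \<le> (SUP t. h t) + (SUP t. k t)"
    by (rule sup_add_le[of h B k C]) (use assms in auto)
  ultimately show ?thesis unfolding osc_def by simp
qed

lemma rd_cdf_bounds: assumes "real_distribution M" shows "0 \<le> cdf M t" "cdf M t \<le> 1"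
  using assms real_distribution.cdf_bounded_prob finite_borel_measure.cdf_nonneg
    real_distribution.finite_borel_measure_M by blast+

lemma rd_diff_bnd: assumes "real_distribution M" "real_distribution N"
  shows "\<bar>cdf M t - cdf N t\<bar> \<le> 1"
  using rd_cdf_bounds[OF assms(1), of t] rd_cdf_bounds[OF assms(2), of t] by linarith

lemma rd_mono: assumes "real_distribution M" "s \<le> t" shows "cdf M s \<le> cdf M t"
  using assms finite_borel_measure.cdf_nondecreasing real_distribution.finite_borel_measure_M by blast

lemma sup_diff_nonneg: assumes "real_distribution M" "real_distribution N"
  shows "0 \<le> (SUP t. cdf M t - cdf N t)"
proof (rule tendsto_le[where F=at_top])
  show "((\<lambda>t. cdf M t - cdf N t) \<longlongrightarrow> 0) at_top"
    using tendsto_diff[OF real_distribution.cdf_lim_at_top_prob[OF assms(1)]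
       real_distribution.cdf_lim_at_top_prob[OF assms(2)]] by simp
  show "((\<lambda>t. SUP t. cdf M t - cdf N t) \<longlongrightarrow> (SUP t. cdf M t - cdf N t)) at_top" by simp
  show "\<forall>\<^sub>F x in at_top. cdf M x - cdf N x \<le> (SUP t. cdf M t - cdf N t)"
    by (intro always_eventually allI sup_upper[where B=1] rd_diff_bnd assms)
qed simp

lemma kuiper_sym: "kuiper_dist M N = kuiper_dist N M"
  unfolding kuiper_dist_def by simp

lemma kuiper_nonneg: assumes "real_distribution M" "real_distribution N"
  shows "0 \<le> kuiper_dist M N"
  using sup_diff_nonneg[OF assms] sup_diff_nonneg[OF assms(2,1)]
  unfolding kuiper_dist_def distfun_cdf by simp

lemma kuiper_le1: assumes "real_distribution M" "real_distribution N"
  shows "kuiper_dist M N \<le> 1"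
proof -
  have key: "cdf M s - cdf N s + (cdf N t - cdf M t) \<le> 1" for s t
  proof (cases "s \<le> t")
    case True
    then show ?thesis using rd_mono[OF assms(1) True] rd_mono[OF assms(2) True]
      rd_cdf_bounds[OF assms(1)] rd_cdf_bounds[OF assms(2)] by smt
  next
    case False
    then have "t \<le> s" by simp
    then show ?thesis using rd_mono[OF assms(1) \<open>t \<le> s\<close>] rd_mono[OF assms(2) \<open>t \<le> s\<close>]
      rd_cdf_bounds[OF assms(1)] rd_cdf_bounds[OF assms(2)] by smt
  qed
  have "cdf M s - cdf N s \<le> 1 - (SUP t. cdf N t - cdf M t)" for s
  proof -
    have "(SUP t. cdf N t - cdf M t) \<le> 1 - (cdf M s - cdf N s)"
    proof (rule sup_least)
      fix t show "cdf N t - cdf M t \<le> 1 - (cdf M s - cdf N s)" using key[of s t] by linarith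
    qed
    then show ?thesis by simp
  qed
  then have "(SUP s. cdf M s - cdf N s) \<le> 1 - (SUP t. cdf N t - cdf M t)"
    by (rule sup_least)
  then show ?thesis unfolding kuiper_dist_def distfun_cdf by simp
qed

lemma kuiper_triangle: assumes "real_distribution L" "real_distribution M" "real_distribution N"
  shows "kuiper_dist L N \<le> kuiper_dist L M + kuiper_dist M N"
proof -
  have "kuiper_dist L N = osc (\<lambda>t. (cdf L t - cdf M t) + (cdf M t - cdf N t))"
    unfolding kuiper_osc by simp
  also have "\<dots> \<le> osc (\<lambda>t. cdf L t - cdf M t) + osc (\<lambda>t. cdf M t - cdf N t)"
    by (rule osc_add_le[where B=1 and C=1]) (use rd_diff_bnd assms in auto)
  finally show ?thesis unfolding kuiper_osc .
qed

lemma kuiper_self: "kuiper_dist M M = 0"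
  unfolding kuiper_dist_def by simp

lemma kuiper_eq0: assumes "real_distribution M" "real_distribution N" "kuiper_dist M N = 0"
  shows "M = N"
proof -
  have a: "(SUP t. cdf M t - cdf N t) = 0" "(SUP t. cdf N t - cdf M t) = 0"
    using sup_diff_nonneg[OF assms(1,2)] sup_diff_nonneg[OF assms(2,1)] assms(3)
    unfolding kuiper_dist_def distfun_cdf by linarith+
  have "cdf M t = cdf N t" for t
    using sup_upper[of "\<lambda>t. cdf M t - cdf N t" 1 t] sup_upper[of "\<lambda>t. cdf N t - cdf M t" 1 t]
      rd_diff_bnd[OF assms(1,2)] rd_diff_bnd[OF assms(2,1)] a by force
  then show ?thesis using cdf_unique assms by blast
qed

lemma rd_meas_bounds: assumes "real_distribution M" shows "0 \<le> measure M A" "measure M A \<le> 1"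
  using assms by (auto simp: real_distribution_def intro: prob_space.prob_le_1)

lemma G_diff_bnd: assumes "real_distribution M" "real_distribution N"
  shows "\<bar>measure M {..<t} - measure N {..<t}\<bar> \<le> 1"
  using rd_meas_bounds[OF assms(1), of "{..<t}"] rd_meas_bounds[OF assms(2), of "{..<t}"] by linarith

lemma G_le_F: assumes "real_distribution M" "s < t"
  shows "cdf M s \<le> measure M {..<t}" "measure M {..<t} \<le> cdf M t"
proof -
  interpret real_distribution M by fact
  show "cdf M s \<le> measure M {..<t}" unfolding cdf_def
    by (rule finite_measure_mono) (use assms in auto)
  show "measure M {..<t} \<le> cdf M t" unfolding cdf_def
    by (rule finite_measure_mono) (use assms in auto)
qed

lemma G_at_right: assumes "real_distribution M"
  shows "((\<lambda>t. measure M {..<t}) \<longlongrightarrow> cdf M s) (at_right s)"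
proof (rule tendsto_sandwich[where f="\<lambda>t. cdf M s" and h="cdf M"])
  show "\<forall>\<^sub>F n in at_right s. cdf M s \<le> measure M {..<n}"
    by (rule eventually_at_rightI[where b="s+1"]) (use G_le_F[OF assms] in auto)
  show "\<forall>\<^sub>F n in at_right s. measure M {..<n} \<le> cdf M n"
    by (rule eventually_at_rightI[where b="s+1"]) (use G_le_F[OF assms] in auto)
  show "(cdf M \<longlongrightarrow> cdf M s) (at_right s)"
    using finite_borel_measure.cdf_is_right_cont[OF real_distribution.finite_borel_measure_M[OF assms]]
    by (simp add: continuous_within)
qed simp

lemma sup_left: assumes "real_distribution M" "real_distribution N"
  shows "(SUP s. measure M {..<s} - measure N {..<s}) = (SUP s. cdf M s - cdf N s)"
proof (rule antisym)
  show "(SUP s. measure M {..<s} - measure N {..<s}) \<le> (SUP s. cdf M s - cdf N s)"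
  proof (rule sup_least)
    fix s
    show "measure M {..<s} - measure N {..<s} \<le> (SUP s. cdf M s - cdf N s)"
    proof (rule tendsto_le[where F="at_left s"])
      show "((\<lambda>t. cdf M t - cdf N t) \<longlongrightarrow> measure M {..<s} - measure N {..<s}) (at_left s)"
        by (intro tendsto_diff finite_borel_measure.cdf_at_left
             real_distribution.finite_borel_measure_M assms)
      show "\<forall>\<^sub>F x in at_left s. cdf M x - cdf N x \<le> (SUP t. cdf M t - cdf N t)"
        by (intro always_eventually allI sup_upper[where B=1] rd_diff_bnd assms)
    qed simp_all
  qed
  show "(SUP s. cdf M s - cdf N s) \<le> (SUP s. measure M {..<s} - measure N {..<s})"
  proof (rule sup_least)
    fix s
    show "cdf M s - cdf N s \<le> (SUP s. measure M {..<s} - measure N {..<s})"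
    proof (rule tendsto_le[where F="at_right s"])
      show "((\<lambda>t. measure M {..<t} - measure N {..<t}) \<longlongrightarrow> cdf M s - cdf N s) (at_right s)"
        by (intro tendsto_diff G_at_right assms)
      show "\<forall>\<^sub>F x in at_right s. measure M {..<x} - measure N {..<x}
           \<le> (SUP s. measure M {..<s} - measure N {..<s})"
        by (intro always_eventually allI sup_upper[where B=1] G_diff_bnd assms)
    qed simp_all
  qed
qed

lemma rd_return: "real_distribution (return borel a)"
  unfolding real_distribution_def real_distribution_axioms_def
  by (auto intro: prob_space_return)

lemma cdf_return: "cdf (return borel a) t = (if a \<le> t then 1 else 0)"
  unfolding cdf_def by (simp add: measure_return)

lemma cdf_split_atom: assumes "real_distribution M"
  shows "cdf M a = measure M {..<a} + measure M {a}"
proof -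
  interpret real_distribution M by fact
  have "{..a} = {..<a} \<union> {a}" by auto
  moreover have "measure M ({..<a} \<union> {a}) = measure M {..<a} + measure M {a}"
    by (rule finite_measure_Union) auto
  ultimately show ?thesis unfolding cdf_def by simp
qed

lemma kuiper_dirac: assumes "real_distribution N"
  shows "kuiper_dist (return borel a) N = 1 - measure N {a}"
proof -
  let ?H = "\<lambda>t. if a \<le> t then 1 else (0::real)"
  have b1: "\<bar>?H t - cdf N t\<bar> \<le> 1" for t
    using rd_cdf_bounds[OF assms, of t] by auto
  have b2: "\<bar>cdf N t - ?H t\<bar> \<le> 1" for t
    using rd_cdf_bounds[OF assms, of t] by auto
  have S1: "(SUP t. ?H t - cdf N t) = 1 - cdf N a"
  proof (rule antisym)
    show "(SUP t. ?H t - cdf N t) \<le> 1 - cdf N a"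
    proof (rule sup_least)
      fix t show "?H t - cdf N t \<le> 1 - cdf N a"
        using rd_mono[OF assms, where s=a and t=t] rd_cdf_bounds[OF assms, of t] rd_cdf_bounds[OF assms, of a]
        by (cases "a \<le> t") auto
    qed
    show "1 - cdf N a \<le> (SUP t. ?H t - cdf N t)"
      using sup_upper[of "\<lambda>t. ?H t - cdf N t" 1 a] b1 by simp
  qed
  have S2: "(SUP t. cdf N t - ?H t) = measure N {..<a}"
  proof (rule antisym)
    show "(SUP t. cdf N t - ?H t) \<le> measure N {..<a}"
    proof (rule sup_least)
      fix t show "cdf N t - ?H t \<le> measure N {..<a}"
        using G_le_F(1)[OF assms, of t a] rd_cdf_bounds[OF assms, of t]
          measure_nonneg[of N "{..<a}"] by (cases "a \<le> t") (auto simp del: measure_nonneg)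
    qed
    show "measure N {..<a} \<le> (SUP t. cdf N t - ?H t)"
    proof (rule tendsto_le[where F="at_left a"])
      show "((\<lambda>t. cdf N t - ?H t) \<longlongrightarrow> measure N {..<a}) (at_left a)"
      proof -
        have "((\<lambda>t. cdf N t) \<longlongrightarrow> measure N {..<a}) (at_left a)"
          by (intro finite_borel_measure.cdf_at_left real_distribution.finite_borel_measure_M assms)
        moreover have "\<forall>\<^sub>F t in at_left a. cdf N t = cdf N t - ?H t"
          by (rule eventually_at_leftI[where a="a - 1"]) auto
        ultimately show ?thesis by (rule Lim_transform_eventually)
      qed
      show "\<forall>\<^sub>F x in at_left a. cdf N x - ?H x \<le> (SUP t. cdf N t - ?H t)"
        using sup_upper[of "\<lambda>t. cdf N t - ?H t" 1] b2 by simp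
    qed simp_all
  qed
  have "kuiper_dist (return borel a) N = (SUP t. ?H t - cdf N t) + (SUP t. cdf N t - ?H t)"
    unfolding kuiper_dist_def distfun_cdf cdf_return by simp
  then show ?thesis using S1 S2 cdf_split_atom[OF assms, of a] by simp
qed



lemma rd_distr: assumes "real_distribution M" "f \<in> borel_measurable borel"
  shows "real_distribution (distr M borel f)"
proof -
  interpret real_distribution M by fact
  have "measurable M borel = measurable borel borel" by (rule measurable_cong_sets) simp_all
  then show ?thesis using assms(2) by (intro real_distribution_distr) simp
qed

lemma cdf_distr: assumes "real_distribution M" "f \<in> borel_measurable borel"
  shows "cdf (distr M borel f) t = measure M {x. f x \<le> t}"
proof -
  interpret real_distribution M by fact
  have "measurable M borel = measurable borel borel" by (rule measurable_cong_sets) simp_all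
  then have "f \<in> measurable M borel" using assms(2) by simp
  then show ?thesis unfolding cdf_def by (subst measure_distr) (auto simp: vimage_def)
qed

lemma SUP_surj: assumes "surj h" shows "(SUP t. f (h t)) = (SUP s. (f s::real))"
proof -
  have "(SUP t. f (h t)) = Sup (f ` (h ` UNIV))" by (simp add: image_image)
  then show ?thesis using assms by simp
qed

lemma homeo_facts: fixes h h' :: "real \<Rightarrow> real" assumes "homeomorphism (UNIV::real set) UNIV h h'"
  shows "inv h = h'" "\<And>x. h' (h x) = x" "\<And>y. h (h' y) = y" "surj h" "surj h'"
    "h' \<in> borel_measurable borel" "h \<in> borel_measurable borel"
    "strict_mono_on UNIV h' \<or> strict_antimono_on UNIV h'"
proof -
  have a: "\<And>x. h' (h x) = x" "\<And>y. h (h' y) = y" "continuous_on UNIV h" "continuous_on UNIV h'"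
    using assms unfolding homeomorphism_def by auto
  show "\<And>x. h' (h x) = x" "\<And>y. h (h' y) = y" by (fact a)+
  show "inv h = h'" by (rule inv_equality) (use a in auto)
  show "surj h" by (rule surjI[where f=h']) (rule a(2))
  show "surj h'" by (rule surjI[where f=h]) (rule a(1))
  show "h' \<in> borel_measurable borel" by (rule borel_measurable_continuous_onI) (rule a(4))
  show "h \<in> borel_measurable borel" by (rule borel_measurable_continuous_onI) (rule a(3))
  have "inj_on h' UNIV" by (rule inj_on_inverseI[where g=h]) (rule a(2))
  moreover have "is_interval (UNIV::real set)" by simp
  ultimately show "strict_mono_on UNIV h' \<or> strict_antimono_on UNIV h'"
    using injective_eq_monotone_map[of UNIV h'] a(4) by simp
qed
lemma kuiper_homeo: fixes h h' :: "real \<Rightarrow> real" assumes "homeomorphism (UNIV::real set) UNIV h h'"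
  and M: "real_distribution M" and N: "real_distribution N"
  shows "kuiper_dist (distr M borel h') (distr N borel h') = kuiper_dist M N"
proof -
  note hf = homeo_facts[OF assms(1)]
  show ?thesis
  proof (cases "strict_mono_on UNIV h'")
    case True
    have set: "{x. h' x \<le> t} = {..h t}" for t
    proof -
      have "h' x \<le> t \<longleftrightarrow> x \<le> h t" for x
      proof -
        have m: "a < b \<Longrightarrow> h' a < h' b" for a b using True by (simp add: strict_mono_on_def)
        show ?thesis using m[of x "h t"] m[of "h t" x] hf(3)[of t] hf(2)
          by (cases "x < h t"; cases "x = h t") auto
      qed
      then show ?thesis by auto
    qed
    have c: "cdf (distr K borel h') t = cdf K (h t)" if "real_distribution K" for K t
      using cdf_distr[OF that hf(6)] set unfolding cdf_def by simp
    show ?thesis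
      unfolding kuiper_dist_def distfun_cdf c[OF M] c[OF N]
      using SUP_surj[OF hf(4), of "\<lambda>s. cdf M s - cdf N s"] SUP_surj[OF hf(4), of "\<lambda>s. cdf N s - cdf M s"]
      by simp
  next
    case False
    then have anti: "strict_antimono_on UNIV h'" using hf(8) by simp
    have set: "{x. h' x \<le> t} = UNIV - {..<h t}" for t
    proof -
      have iff: "h' x \<le> t \<longleftrightarrow> h t \<le> x" for x
      proof -
        have m: "a < b \<Longrightarrow> h' a > h' b" for a b using anti by (simp add: monotone_on_def)
        show ?thesis using m[of x "h t"] m[of "h t" x] hf(3)[of t] hf(2)
          by (cases "x < h t"; cases "x = h t") auto
      qed
      show ?thesis
      proof (rule set_eqI)
        fix x show "x \<in> {x. h' x \<le> t} \<longleftrightarrow> x \<in> UNIV - {..<h t}"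
          using iff[of x] by (simp add: not_less)
      qed
    qed
    have c: "cdf (distr K borel h') t = 1 - measure K {..<h t}" if "real_distribution K" for K t
    proof -
      interpret real_distribution K by fact
      show ?thesis using cdf_distr[OF that hf(6)] set prob_compl[of "{..<h t}"] by simp
    qed
    have "kuiper_dist (distr M borel h') (distr N borel h') =
      (SUP t. measure N {..<h t} - measure M {..<h t}) + (SUP t. measure M {..<h t} - measure N {..<h t})"
      unfolding kuiper_dist_def distfun_cdf c[OF M] c[OF N] by simp
    also have "\<dots> = (SUP s. measure N {..<s} - measure M {..<s}) + (SUP s. measure M {..<s} - measure N {..<s})"
      using SUP_surj[OF hf(4), of "\<lambda>s. measure N {..<s} - measure M {..<s}"]
        SUP_surj[OF hf(4), of "\<lambda>s. measure M {..<s} - measure N {..<s}"] by simp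
    also have "\<dots> = kuiper_dist M N"
      unfolding kuiper_dist_def distfun_cdf sup_left[OF M N] sup_left[OF N M] by simp
    finally show ?thesis .
  qed
qed

lemma part2: fixes g g' :: "real \<Rightarrow> real" assumes "homeomorphism (UNIV::real set) UNIV g g'"
  shows "(\<forall>\<mu>\<in>borel_prob_measures. comp_homeo \<mu> g \<in> borel_prob_measures)
            \<and> (\<lambda>\<mu>. comp_homeo \<mu> g) ` borel_prob_measures = borel_prob_measures
            \<and> (\<forall>\<mu>\<in>borel_prob_measures. \<forall>\<nu>\<in>borel_prob_measures.
                  kuiper_dist (comp_homeo \<mu> g) (comp_homeo \<nu> g) = kuiper_dist \<mu> \<nu>)"
proof -
  note hf = homeo_facts[OF assms]
  have ch: "comp_homeo \<mu> g = distr \<mu> borel g'" for \<mu> unfolding comp_homeo_def hf(1) ..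
  have 1: "\<forall>\<mu>\<in>PR. comp_homeo \<mu> g \<in> PR"
    using rd_distr hf(6) by (auto simp: ch PR_iff)
  have 2: "PR \<subseteq> (\<lambda>\<mu>. comp_homeo \<mu> g) ` PR"
  proof
    fix \<mu> assume m: "\<mu> \<in> PR"
    then have rm: "real_distribution \<mu>" by (simp add: PR_iff)
    then have s: "sets \<mu> = sets borel" by (simp add: real_distribution_def real_distribution_axioms_def)
    have "measurable \<mu> (borel::real measure) = measurable borel borel" by (rule measurable_cong_sets) (simp_all add: s)
    then have g: "g \<in> measurable \<mu> borel" using hf(7) by (simp only:)
    have "distr (distr \<mu> borel g) borel g' = distr \<mu> borel (g' \<circ> g)"
      by (rule distr_distr[OF hf(6) g])
    also have "g' \<circ> g = (\<lambda>x. x)" using hf(2) by auto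
    also have "distr \<mu> borel (\<lambda>x. x) = \<mu>" using distr_id2[of borel \<mu>] s by simp
    finally have "\<mu> = comp_homeo (distr \<mu> borel g) g" unfolding ch by simp
    moreover have "distr \<mu> borel g \<in> PR" using rd_distr[OF rm hf(7)] by (simp add: PR_iff)
    ultimately show "\<mu> \<in> (\<lambda>\<mu>. comp_homeo \<mu> g) ` PR" by blast
  qed
  have 3: "\<forall>\<mu>\<in>PR. \<forall>\<nu>\<in>PR. kuiper_dist (comp_homeo \<mu> g) (comp_homeo \<nu> g) = kuiper_dist \<mu> \<nu>"
    using kuiper_homeo[OF assms] by (auto simp: ch PR_iff)
  show ?thesis using 1 2 3 by blast
qed



lemma rd_sets: "real_distribution M \<Longrightarrow> sets M = sets borel"
  by (simp add: real_distribution_def real_distribution_axioms_def)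

lemma measure_restrict_full: assumes "real_distribution M" "S \<in> sets borel" "measure M S = 1"
  "A \<in> sets borel" shows "measure M A = measure M (A \<inter> S)"
proof -
  interpret real_distribution M by fact
  have "measure M (A - S) \<le> measure M (UNIV - S)"
    by (rule finite_measure_mono) (use assms in auto)
  also have "\<dots> = 0" using prob_compl[of S] assms by simp
  finally have z: "measure M (A - S) = 0" using measure_nonneg[of M "A - S"] by linarith
  have "A = (A \<inter> S) \<union> (A - S)" by auto
  then have "measure M A = measure M ((A \<inter> S) \<union> (A - S))" by simp
  also have "\<dots> = measure M (A \<inter> S) + measure M (A - S)"
    by (rule finite_measure_Union) (use assms in auto)
  finally show ?thesis using z by simp
qed

lemma atoms_determine:
  assumes M: "real_distribution M" and N: "real_distribution N" and S: "finite S"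
    and one: "measure M S = 1" and eq: "\<And>c. c \<in> S \<Longrightarrow> measure N {c} = measure M {c}"
  shows "M = N"
proof -
  interpret M: real_distribution M by fact
  interpret N: real_distribution N by fact
  have Sb: "S \<in> sets borel" using S by (simp add: countable_finite sets.countable)
  have sumM: "measure M T = (\<Sum>c\<in>T. measure M {c})" if "T \<subseteq> S" for T
    using finite_subset[OF that S] by (intro M.finite_measure_eq_sum_singleton) auto
  have sumN: "measure N T = (\<Sum>c\<in>T. measure N {c})" if "T \<subseteq> S" for T
    using finite_subset[OF that S] by (intro N.finite_measure_eq_sum_singleton) auto
  have eqT: "measure N T = measure M T" if "T \<subseteq> S" for T
    using sumM[OF that] sumN[OF that] eq that by (auto intro: sum.cong)
  have oneN: "measure N S = 1" using eqT[of S] one by simp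
  have "cdf M t = cdf N t" for t
  proof -
    have "cdf M t = measure M ({..t} \<inter> S)" unfolding cdf_def
      by (rule measure_restrict_full[OF M Sb one]) simp
    also have "\<dots> = measure N ({..t} \<inter> S)" using eqT[of "{..t} \<inter> S"] by simp
    also have "\<dots> = cdf N t" unfolding cdf_def
      by (rule measure_restrict_full[OF N Sb oneN, symmetric]) simp
    finally show ?thesis .
  qed
  then show ?thesis using cdf_unique M N by blast
qed

lemma um_props: assumes M: "real_distribution M" and A: "A \<in> sets borel" and pos: "measure M A > 0"
  shows "real_distribution (uniform_measure M A)"
    "\<And>B. B \<in> sets borel \<Longrightarrow> measure (uniform_measure M A) B = measure M (A \<inter> B) / measure M A"
proof -
  interpret real_distribution M by fact
  have e: "emeasure M A \<noteq> 0" "emeasure M A \<noteq> \<infinity>"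
    using pos by (auto simp: emeasure_eq_measure)
  show "real_distribution (uniform_measure M A)"
    unfolding real_distribution_def real_distribution_axioms_def
    using prob_space_uniform_measure[OF e] by simp
  show "\<And>B. B \<in> sets borel \<Longrightarrow> measure (uniform_measure M A) B = measure M (A \<inter> B) / measure M A"
    using measure_uniform_measure[OF e] by simp
qed

definition qf :: "real measure \<Rightarrow> real \<Rightarrow> real" where
  "qf M u = Inf {t. u \<le> cdf M t}"

lemma qf_galois: assumes M: "real_distribution M" and u: "0 < u" "u < 1"
  shows "qf M u \<le> t \<longleftrightarrow> u \<le> cdf M t"
proof -
  let ?A = "{t. u \<le> cdf M t}"
  have "\<forall>\<^sub>F t in at_top. u < cdf M t"
    using real_distribution.cdf_lim_at_top_prob[OF M] u(2) by (rule order_tendstoD)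
  then obtain t0 where t0: "\<And>t. t \<ge> t0 \<Longrightarrow> u < cdf M t" by (auto simp: eventually_at_top_linorder)
  have ne: "?A \<noteq> {}" using t0[of t0] less_imp_le by blast
  have "\<forall>\<^sub>F t in at_bot. cdf M t < u"
    using finite_borel_measure.cdf_lim_at_bot[OF real_distribution.finite_borel_measure_M[OF M]] u(1)
    by (rule order_tendstoD)
  then obtain t1 where t1: "\<And>t. t \<le> t1 \<Longrightarrow> cdf M t < u" by (auto simp: eventually_at_bot_linorder)
  have bdd: "bdd_below ?A"
  proof (rule bdd_belowI[where m=t1])
    fix x assume "x \<in> ?A" then show "t1 \<le> x" using t1[of x] by (cases "x \<le> t1") auto
  qed
  have key: "u \<le> cdf M (qf M u)"
  proof (rule tendsto_le[where F="at_right (qf M u)"])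
    show "(cdf M \<longlongrightarrow> cdf M (qf M u)) (at_right (qf M u))"
      using finite_borel_measure.cdf_is_right_cont[OF real_distribution.finite_borel_measure_M[OF M]]
      by (simp add: continuous_within)
    show "\<forall>\<^sub>F x in at_right (qf M u). u \<le> cdf M x"
    proof (rule eventually_at_rightI[where b="qf M u + 1"])
      fix s assume "s \<in> {qf M u<..<qf M u + 1}"
      then have "Inf ?A < s" by (simp add: qf_def)
      then obtain a where "a \<in> ?A" "a < s" using cInf_less_iff[OF ne bdd] by blast
      then show "u \<le> cdf M s" using rd_mono[OF M, of a s] by simp
    qed simp
  qed simp_all
  show ?thesis
  proof
    assume "qf M u \<le> t" then show "u \<le> cdf M t" using key rd_mono[OF M, of "qf M u" t] by simp
  next
    assume "u \<le> cdf M t" then show "qf M u \<le> t" unfolding qf_def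
      by (intro cInf_lower bdd) simp
  qed
qed



definition isdirac :: "real measure \<Rightarrow> bool" where
  "isdirac M \<longleftrightarrow> (\<exists>a. M = return borel a)"

definition QP :: "real measure \<Rightarrow> bool" where
  "QP M \<longleftrightarrow> (\<forall>\<nu>\<in>PR. \<nu> \<noteq> M \<longrightarrow> (\<exists>\<rho>\<in>PR. kuiper_dist M \<rho> = 1 \<and> kuiper_dist \<nu> \<rho> < 1))"

lemma measure_return_single: fixes a c :: real shows "measure (return borel a) {c} = (if c = a then 1 else 0)"
  by (subst measure_return) (auto simp: indicator_def intro: borel_closed)

lemma dirac_QP: "QP (return borel a)"
  unfolding QP_def
proof (intro ballI impI)
  fix \<nu> assume nP: "\<nu> \<in> PR" and ne: "\<nu> \<noteq> return borel a"
  then have N: "real_distribution \<nu>" by (simp add: PR_iff)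
  interpret N: real_distribution \<nu> by fact
  define p where "p = measure \<nu> {a}"
  have p1: "p < 1"
  proof (rule ccontr)
    assume "\<not> p < 1"
    then have "measure \<nu> {a} = 1" using rd_meas_bounds[OF N, of "{a}"] p_def by simp
    then have "\<nu> = return borel a"
      by (intro atoms_determine[OF N rd_return, of "{a}"]) (simp_all add: measure_return_single)
    with ne show False by simp
  qed
  have p0: "0 \<le> p" unfolding p_def by simp
  define A where "A = UNIV - {a}"
  have Ab: "A \<in> sets borel" unfolding A_def by simp
  have mA: "measure \<nu> A = 1 - p"
    unfolding A_def p_def using N.prob_compl[of "{a}"] by simp
  define \<rho> where "\<rho> = uniform_measure \<nu> A"
  have R: "real_distribution \<rho>" unfolding \<rho>_def using um_props(1)[OF N Ab] mA p1 by simp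
  have mR: "measure \<rho> B = measure \<nu> (A \<inter> B) / (1 - p)" if "B \<in> sets borel" for B
    unfolding \<rho>_def using um_props(2)[OF N Ab _ that] mA p1 by simp
  have "measure \<rho> {a} = 0" using mR[of "{a}"] A_def by simp
  then have k1: "kuiper_dist (return borel a) \<rho> = 1" using kuiper_dirac[OF R] by simp
  have cdfeq: "cdf \<nu> t - cdf \<rho> t = p * ((if a \<le> t then 1 else 0) - cdf \<rho> t)" for t
  proof -
    have c1: "cdf \<rho> t = measure \<nu> (A \<inter> {..t}) / (1-p)" unfolding cdf_def using mR by simp
    have "{..t} = (A \<inter> {..t}) \<union> ({a} \<inter> {..t})" unfolding A_def by auto
    then have "cdf \<nu> t = measure \<nu> ((A \<inter> {..t}) \<union> ({a} \<inter> {..t}))" unfolding cdf_def by simp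
    also have "\<dots> = measure \<nu> (A \<inter> {..t}) + measure \<nu> ({a} \<inter> {..t})"
      by (rule N.finite_measure_Union) (auto simp: A_def)
    also have "measure \<nu> ({a} \<inter> {..t}) = (if a \<le> t then p else 0)"
      unfolding p_def by (cases "a \<le> t") auto
    finally have c2: "cdf \<nu> t = measure \<nu> (A \<inter> {..t}) + (if a \<le> t then p else 0)" .
    show ?thesis using p1 unfolding c1 c2 by (simp add: field_simps)
  qed
  have "kuiper_dist \<nu> \<rho> = osc (\<lambda>t. p * ((if a \<le> t then 1 else 0) - cdf \<rho> t))"
    unfolding kuiper_osc cdfeq ..
  also have "\<dots> = p * osc (\<lambda>t. (if a \<le> t then 1 else 0) - cdf \<rho> t)"
    by (rule osc_scale[where B=1]) (use rd_cdf_bounds[OF R] p0 in auto)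
  also have "osc (\<lambda>t. (if a \<le> t then 1 else 0) - cdf \<rho> t) = kuiper_dist (return borel a) \<rho>"
    unfolding kuiper_osc cdf_return ..
  finally have "kuiper_dist \<nu> \<rho> < 1" using k1 p1 by simp
  then show "\<exists>\<rho>\<in>PR. kuiper_dist (return borel a) \<rho> = 1 \<and> kuiper_dist \<nu> \<rho> < 1"
    using k1 R by (auto simp: PR_iff)
qed

lemma nondirac_strict: assumes M: "real_distribution M" and nd: "\<not> isdirac M"
  shows "\<exists>t. 0 < cdf M t \<and> cdf M t < 1"
proof (rule ccontr)
  assume h: "\<not> ?thesis"
  let ?q = "qf M (1/2)"
  have "cdf M t = cdf (return borel ?q) t" for t
  proof (cases "?q \<le> t")
    case True then have "1/2 \<le> cdf M t" using qf_galois[OF M, of "1/2" t] by simp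
    moreover have "\<not> (0 < cdf M t \<and> cdf M t < 1)" using h by blast
    ultimately have "cdf M t = 1" using rd_cdf_bounds[OF M, of t] by linarith
    then show ?thesis using True by (simp add: cdf_return)
  next
    case False then have "cdf M t < 1/2" using qf_galois[OF M, of "1/2" t] by simp
    moreover have "\<not> (0 < cdf M t \<and> cdf M t < 1)" using h by blast
    ultimately have "cdf M t = 0" using rd_cdf_bounds[OF M, of t] by linarith
    then show ?thesis using False by (simp add: cdf_return)
  qed
  then have "M = return borel ?q" using cdf_unique[OF M rd_return] by blast
  with nd show False by (auto simp: isdirac_def)
qed

lemma nondirac_notQP: assumes M: "real_distribution M" and nd: "\<not> isdirac M"
  shows "\<not> QP M"
proof
  assume Q: "QP M"
  interpret real_distribution M by fact
  obtain t where t: "0 < cdf M t" "cdf M t < 1" using nondirac_strict[OF M nd] by blast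
  define p where "p = cdf M t"
  have mL: "measure M {..t} = p" unfolding p_def cdf_def ..
  have "UNIV - {..t} = {t<..}" by auto
  then have mU: "measure M {t<..} = 1 - p" using prob_compl[of "{..t}"] mL by simp
  define \<nu> where "\<nu> = uniform_measure M {..t}"
  define \<nu>' where "\<nu>' = uniform_measure M {t<..}"
  have p0: "0 < p" "p < 1" using t p_def by auto
  have V: "real_distribution \<nu>" unfolding \<nu>_def using um_props(1)[OF M _ ] mL p0 by simp
  have V': "real_distribution \<nu>'" unfolding \<nu>'_def using um_props(1)[OF M _ ] mU p0 by simp
  have cV: "cdf \<nu> s = measure M ({..t} \<inter> {..s}) / p" for s
    unfolding \<nu>_def cdf_def using um_props(2)[OF M _ _, of "{..t}" "{..s}"] mL p0 by simp
  have cV': "cdf \<nu>' s = measure M ({t<..} \<inter> {..s}) / (1 - p)" for s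
    unfolding \<nu>'_def cdf_def using um_props(2)[OF M _ _, of "{t<..}" "{..s}"] mU p0 by simp
  have cM: "cdf M s = p * cdf \<nu> s + (1 - p) * cdf \<nu>' s" for s
  proof -
    have "{..s} = ({..t} \<inter> {..s}) \<union> ({t<..} \<inter> {..s})" by auto
    then have "cdf M s = measure M (({..t} \<inter> {..s}) \<union> ({t<..} \<inter> {..s}))" unfolding cdf_def by simp
    also have "\<dots> = measure M ({..t} \<inter> {..s}) + measure M ({t<..} \<inter> {..s})"
      by (rule finite_measure_Union) auto
    finally show ?thesis unfolding cV cV' using p0 by simp
  qed
  have "\<nu> \<noteq> M"
  proof
    assume "\<nu> = M"
    then have "cdf \<nu> t = p" using p_def by simp
    moreover have "cdf \<nu> t = 1" using cV[of t] mL p0 by simp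
    ultimately show False using p0 by simp
  qed
  moreover have "\<nu> \<in> PR" using V by (simp add: PR_iff)
  ultimately obtain \<rho> where rP: "\<rho> \<in> PR" and k1: "kuiper_dist M \<rho> = 1" and k2: "kuiper_dist \<nu> \<rho> < 1"
    using Q unfolding QP_def by blast
  have R: "real_distribution \<rho>" using rP by (simp add: PR_iff)
  have "kuiper_dist M \<rho> = osc (\<lambda>s. p * (cdf \<nu> s - cdf \<rho> s) + (1 - p) * (cdf \<nu>' s - cdf \<rho> s))"
    unfolding kuiper_osc cM by (simp add: algebra_simps)
  also have "\<dots> \<le> osc (\<lambda>s. p * (cdf \<nu> s - cdf \<rho> s)) + osc (\<lambda>s. (1 - p) * (cdf \<nu>' s - cdf \<rho> s))"
    by (rule osc_add_le[where B=1 and C=1])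
       (use rd_diff_bnd[OF V R] rd_diff_bnd[OF V' R] p0 in \<open>auto simp: abs_mult intro: mult_le_one\<close>)
  also have "osc (\<lambda>s. p * (cdf \<nu> s - cdf \<rho> s)) = p * kuiper_dist \<nu> \<rho>"
    unfolding kuiper_osc by (rule osc_scale[where B=1]) (use rd_diff_bnd[OF V R] p0 in auto)
  also have "osc (\<lambda>s. (1 - p) * (cdf \<nu>' s - cdf \<rho> s)) = (1 - p) * kuiper_dist \<nu>' \<rho>"
    unfolding kuiper_osc by (rule osc_scale[where B=1]) (use rd_diff_bnd[OF V' R] p0 in auto)
  finally have "1 \<le> p * kuiper_dist \<nu> \<rho> + (1 - p) * kuiper_dist \<nu>' \<rho>" using k1 by simp
  moreover have "(1 - p) * kuiper_dist \<nu>' \<rho> \<le> 1 - p"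
    using kuiper_le1[OF V' R] p0 by (simp add: mult_left_le)
  moreover have "p * kuiper_dist \<nu> \<rho> < p" using k2 p0 by simp
  ultimately show False by simp
qed



definition betw :: "real \<Rightarrow> real \<Rightarrow> real \<Rightarrow> bool" where
  "betw x y z \<longleftrightarrow> min x z < y \<and> y < max x z"

definition sep :: "real \<Rightarrow> real \<Rightarrow> real \<Rightarrow> real \<Rightarrow> bool" where
  "sep a b c e \<longleftrightarrow> (betw a c b \<noteq> betw a e b)"

locale sepmap =
  fixes G :: "real \<Rightarrow> real"
  assumes injG: "inj G" and surjG: "surj G"
    and sepG: "\<And>a b c e. distinct [a,b,c,e] \<Longrightarrow> sep a b c e = sep (G a) (G b) (G c) (G e)"
begin

lemma Gne: "x \<noteq> y \<Longrightarrow> G x \<noteq> G y" using injG by (auto dest: injD)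

lemma claimA: assumes "a < y" "y < b" "\<not> betw (G a) (G y) (G b)" "w < a \<or> b < w"
  shows "betw (G a) (G w) (G b)"
proof -
  have d: "distinct [a,b,y,w]" using assms by auto
  have "sep a b y w" using assms unfolding sep_def betw_def by auto
  then have "sep (G a) (G b) (G y) (G w)" using sepG[OF d] by simp
  then show ?thesis using assms(3) unfolding sep_def by simp
qed

lemma claimB: assumes "a < y" "y < b" "\<not> betw (G a) (G y) (G b)" "a < w" "w < b" "w \<noteq> y"
  shows "\<not> betw (G a) (G w) (G b)"
proof -
  have d: "distinct [a,b,y,w]" using assms by auto
  have "\<not> sep a b y w" using assms unfolding sep_def betw_def by auto
  then have "\<not> sep (G a) (G b) (G y) (G w)" using sepG[OF d] by simp
  then show ?thesis using assms(3) unfolding sep_def by simp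
qed

lemma betw_pres: assumes xy: "x < y" and yz: "y < z" shows "betw (G x) (G y) (G z)"
proof (rule ccontr)
  assume N0: "\<not> betw (G x) (G y) (G z)"
  define a where "a n = x - real n" for n
  define b where "b n = z + real n" for n
  have ay: "a n < y" "y < b n" for n using xy yz unfolding a_def b_def by auto
  have ab: "a (Suc n) < a n" "b n < b (Suc n)" for n unfolding a_def b_def by auto
  have N: "\<not> betw (G (a n)) (G y) (G (b n))" for n
  proof (induction n)
    case 0 then show ?case using N0 by (simp add: a_def b_def)
  next
    case (Suc n)
    have A1: "betw (G (a n)) (G (a (Suc n))) (G (b n))"
      by (rule claimA[OF ay Suc]) (use ab in auto)
    have A2: "betw (G (a n)) (G (b (Suc n))) (G (b n))"
      by (rule claimA[OF ay Suc]) (use ab in auto)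
    show ?case using A1 A2 Suc unfolding betw_def by (auto simp: min_def max_def split: if_splits)
  qed
  define l where "l n = min (G (a n)) (G (b n))" for n
  define r where "r n = max (G (a n)) (G (b n))" for n
  have lr: "l n < l (Suc n)" "r (Suc n) < r n" "l n < r n" for n
  proof -
    have A1: "betw (G (a n)) (G (a (Suc n))) (G (b n))"
      by (rule claimA[OF ay N]) (use ab in auto)
    have A2: "betw (G (a n)) (G (b (Suc n))) (G (b n))"
      by (rule claimA[OF ay N]) (use ab in auto)
    show "l n < l (Suc n)" "r (Suc n) < r n" "l n < r n"
      using A1 A2 unfolding betw_def l_def r_def by auto
  qed
  have lmono: "l m \<le> l n" if "m \<le> n" for m n
    using that by (induction n) (auto simp: le_Suc_eq intro: order.trans less_imp_le[OF lr(1)])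
  have rmono: "r n \<le> r m" if "m \<le> n" for m n
    using that by (induction n) (auto simp: le_Suc_eq intro: order.trans less_imp_le[OF lr(2)])
  have lr_all: "l m < r n" for m n
  proof -
    have "l m \<le> l (max m n)" "r (max m n) \<le> r n" by (auto intro: lmono rmono)
    then show ?thesis using lr(3)[of "max m n"] by simp
  qed
  define c where "c = Sup (range l)"
  have bdd: "bdd_above (range l)"
    by (rule bdd_aboveI2[where M="r 0"]) (use lr_all less_imp_le in blast)
  have cl: "l n < c" for n
  proof -
    have "l (Suc n) \<le> c" unfolding c_def by (rule cSUP_upper[OF _ bdd]) simp
    then show ?thesis using lr(1)[of n] by simp
  qed
  have cr: "c < r n" for n
  proof -
    have "c \<le> r (Suc n)" unfolding c_def by (rule cSUP_least) (auto intro: less_imp_le lr_all)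
    then show ?thesis using lr(2)[of n] by simp
  qed
  obtain w where w: "G w = c" using surjG by (metis surj_def)
  have inside: "betw (G (a n)) (G w) (G (b n))" for n
    using cl[of n] cr[of n] w unfolding betw_def l_def r_def by simp
  obtain n :: nat where n: "real n > \<bar>w\<bar> + \<bar>x\<bar> + \<bar>z\<bar>" using reals_Archimedean2 by blast
  have wn: "a n < w" "w < b n" using n unfolding a_def b_def by auto
  show False
  proof (cases "w = y")
    case True then show False using N[of n] inside[of n] by simp
  next
    case False then show False using claimB[OF ay N wn False] inside[of n] by simp
  qed
qed

lemma triple: assumes "u < v" "v < w"
  shows "(G u < G v) = (G v < G w)" "(G u < G v) = (G u < G w)"
  using betw_pres[OF assms] unfolding betw_def by (auto simp: min_def max_def split: if_splits)

lemma Gless_iff: assumes "u < v" shows "\<not> (G u < G v) \<longleftrightarrow> G v < G u"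
  using Gne[of u v] assms by auto

lemma mono_or_anti: "(\<forall>x y. x < y \<longrightarrow> G x < G y) \<or> (\<forall>x y. x < y \<longrightarrow> G y < G x)"
proof -
  have key: "(G a < G b) = (G 0 < G 1)" if ab: "a < b" for a b
  proof -
    define m where "m = min a 0 - 1"
    have m: "m < a" "m < 0" unfolding m_def by auto
    have e1: "(G m < G a) = (G a < G b)" using triple(1)[OF m(1) ab] .
    have e2: "(G m < G 0) = (G 0 < G 1)" using triple(1)[OF m(2)] by simp
    have e3: "(G m < G a) = (G m < G 0)"
    proof (cases a "0::real" rule: linorder_cases)
      case less then show ?thesis using triple(2)[OF m(1) less] by simp
    next
      case equal then show ?thesis by simp
    next
      case greater then show ?thesis using triple(2)[OF m(2) greater] by simp
    qed
    show ?thesis using e1 e2 e3 by simp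
  qed
  show ?thesis
  proof (cases "G 0 < G 1")
    case True then show ?thesis using key by blast
  next
    case False then show ?thesis using key Gless_iff by blast
  qed
qed

end

lemma strict_mono_surj_cont: fixes f :: "real \<Rightarrow> real"
  assumes sm: "\<And>x y. x < y \<Longrightarrow> f x < f y" and su: "surj f"
  shows "continuous_on UNIV f"
  unfolding continuous_on_iff
proof (intro ballI allI impI)
  fix x e :: real assume e: "0 < e"
  have rev: "f u < f v \<Longrightarrow> u < v" for u v using sm by (metis not_less_iff_gr_or_eq order.asym)
  obtain u where u: "f u = f x - e" using su by (metis surj_def)
  obtain v where v: "f v = f x + e" using su by (metis surj_def)
  have ux: "u < x" using rev[of u x] u e by simp
  have xv: "x < v" using rev[of x v] v e by simp
  show "\<exists>d>0. \<forall>x'\<in>UNIV. dist x' x < d \<longrightarrow> dist (f x') (f x) < e"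
  proof (intro exI[of _ "min (x - u) (v - x)"] conjI ballI impI)
    show "0 < min (x - u) (v - x)" using ux xv by simp
    fix x' assume "dist x' x < min (x - u) (v - x)"
    then have "u < x'" "x' < v" by (auto simp: dist_real_def)
    then have "f u < f x'" "f x' < f v" using sm by auto
    then show "dist (f x') (f x) < e" using u v by (simp add: dist_real_def)
  qed
qed

lemma strict_mono_homeo: fixes f :: "real \<Rightarrow> real"
  assumes sm: "(\<forall>x y. x < y \<longrightarrow> f x < f y) \<or> (\<forall>x y. x < y \<longrightarrow> f y < f x)" and su: "surj f"
  shows "homeomorphism UNIV UNIV (inv f) f"
proof -
  have inj: "inj f" using sm by (metis injI linorder_neqE_linordered_idom order_less_irrefl)
  have fi: "f (inv f y) = y" for y using su by (simp add: surj_f_inv_f)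
  have if': "inv f (f x) = x" for x using inj by simp
  have contf: "continuous_on UNIV f"
  proof (cases "\<forall>x y. x < y \<longrightarrow> f x < f y")
    case True then show ?thesis using strict_mono_surj_cont su by blast
  next
    case False
    then have anti: "\<And>x y. x < y \<Longrightarrow> f y < f x" using sm by blast
    have "surj (\<lambda>x. - f x)" using su by (metis surj_def minus_minus)
    then have "continuous_on UNIV (\<lambda>x. - f x)" by (intro strict_mono_surj_cont) (use anti in auto)
    from continuous_on_minus[OF this] show ?thesis by simp
  qed
  have smi: "(\<forall>x y. x < y \<longrightarrow> inv f x < inv f y) \<or> (\<forall>x y. x < y \<longrightarrow> inv f y < inv f x)"
  proof (cases "\<forall>x y. x < y \<longrightarrow> f x < f y")
    case True
    then have "x < y \<Longrightarrow> inv f x < inv f y" for x y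
      using fi[of x] fi[of y] by (metis not_less_iff_gr_or_eq order.asym)
    then show ?thesis by blast
  next
    case False
    then have anti: "\<And>x y. x < y \<Longrightarrow> f y < f x" using sm by blast
    then have "x < y \<Longrightarrow> inv f y < inv f x" for x y
      using fi[of x] fi[of y] by (metis not_less_iff_gr_or_eq order.asym)
    then show ?thesis by blast
  qed
  have sui: "surj (inv f)" using if' by (metis surjI)
  have conti: "continuous_on UNIV (inv f)"
  proof (cases "\<forall>x y. x < y \<longrightarrow> inv f x < inv f y")
    case True then show ?thesis using strict_mono_surj_cont sui by blast
  next
    case False
    then have anti: "\<And>x y. x < y \<Longrightarrow> inv f y < inv f x" using smi by blast
    have "surj (\<lambda>x. - inv f x)" using sui by (metis surj_def minus_minus)
    then have "continuous_on UNIV (\<lambda>x. - inv f x)" by (intro strict_mono_surj_cont) (use anti in auto)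
    from continuous_on_minus[OF this] show ?thesis by simp
  qed
  show ?thesis unfolding homeomorphism_def
    using fi if' contf conti su sui by auto
qed



definition fm :: "nat set \<Rightarrow> (nat \<Rightarrow> real) \<Rightarrow> real measure" where
  "fm K x = distr (uniform_count_measure K) borel x"

lemma fm_meas: "x \<in> measurable (uniform_count_measure K) (borel::real measure)"
proof -
  have "measurable (uniform_count_measure K) (borel::real measure) = measurable (count_space K) borel"
    by (rule measurable_cong_sets) (simp_all add: sets_uniform_count_measure)
  then show ?thesis by simp
qed

lemma fm_rd: assumes "finite K" "K \<noteq> {}" shows "real_distribution (fm K x)"
proof -
  interpret prob_space "uniform_count_measure K" using prob_space_uniform_count_measure assms .
  show ?thesis unfolding fm_def by (rule real_distribution_distr) (rule fm_meas)
qed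

lemma fm_measure: assumes "finite K" "B \<in> sets borel"
  shows "measure (fm K x) B = card {k\<in>K. x k \<in> B} / card K"
proof -
  have "measure (fm K x) B = measure (uniform_count_measure K) (x -` B \<inter> K)"
    unfolding fm_def by (subst measure_distr[OF fm_meas assms(2)]) (simp add: space_uniform_count_measure)
  also have "\<dots> = card (x -` B \<inter> K) / card K"
    by (rule measure_uniform_count_measure) (use assms in auto)
  also have "x -` B \<inter> K = {k\<in>K. x k \<in> B}" by auto
  finally show ?thesis .
qed

lemma fm_full: assumes "finite K" "K \<noteq> {}" shows "measure (fm K x) (x ` K) = 1"
proof -
  have "x ` K \<in> sets borel" using assms by (simp add: countable_finite sets.countable)
  then have "measure (fm K x) (x ` K) = card {k\<in>K. x k \<in> x ` K} / card K" by (rule fm_measure[OF assms(1)])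
  also have "{k\<in>K. x k \<in> x ` K} = K" by auto
  finally show ?thesis using assms by simp
qed

definition tp :: "real \<Rightarrow> real \<Rightarrow> real measure" where
  "tp a b = fm {0,1} (\<lambda>k. if k = 0 then a else b)"

lemma tp_rd: "real_distribution (tp a b)" unfolding tp_def by (rule fm_rd) auto

lemma tp_measure: "B \<in> sets borel \<Longrightarrow> measure (tp a b) B = ((if a \<in> B then 1 else 0) + (if b \<in> B then 1 else 0)) / 2"
proof -
  assume B: "B \<in> sets borel"
  have "measure (tp a b) B = card {k\<in>{0::nat,1}. (if k = 0 then a else b) \<in> B} / card {0::nat,1}"
    unfolding tp_def by (rule fm_measure[OF _ B]) simp
  also have "{k\<in>{0::nat,1}. (if k = 0 then a else b) \<in> B} =
     (if a \<in> B then {0} else {}) \<union> (if b \<in> B then {1} else {})" by auto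
  finally show ?thesis by (auto simp: card_insert_if)
qed

lemma tp_cdf: "cdf (tp a b) t = ((if a \<le> t then 1 else 0) + (if b \<le> t then 1 else 0)) / 2"
  unfolding cdf_def by (subst tp_measure) auto

lemma tp_sym: "tp a b = tp b a"
  by (rule cdf_unique[OF tp_rd tp_rd]) (auto simp: fun_eq_iff tp_cdf)

lemma tp_single: fixes a b :: real shows "a \<noteq> b \<Longrightarrow> measure (tp a b) {a} = 1/2"
  by (subst tp_measure) (auto intro: borel_closed)

lemma tp_full: "measure (tp a b) {a, b} = 1"
proof -
  have "{a,b} \<in> sets borel" by (simp add: countable_finite sets.countable)
  then show ?thesis by (subst tp_measure) auto
qed

lemma osc_le_range: fixes h :: "real \<Rightarrow> real" assumes "\<And>t. lo \<le> h t \<and> h t \<le> hi"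
  shows "osc h \<le> hi - lo"
proof -
  have "(SUP t. h t) \<le> hi" by (rule sup_least) (use assms in auto)
  moreover have "(SUP t. - h t) \<le> - lo" by (rule sup_least) (use assms in auto)
  ultimately show ?thesis unfolding osc_def by simp
qed

lemma osc_ge_diff: fixes h :: "real \<Rightarrow> real" assumes "\<And>t. \<bar>h t\<bar> \<le> B"
  shows "h s - h t \<le> osc h"
  using sup_upper[of h B s] sup_upper[of "\<lambda>t. - h t" B t] assms unfolding osc_def by simp

lemma tp_cdf_mm: "cdf (tp a b) t = ((if min a b \<le> t then 1 else 0) + (if max a b \<le> t then 1 else 0)) / 2"
  unfolding tp_cdf by (auto simp: min_def max_def)

lemma sep_cases: assumes "distinct [a,b,c,e]"
  shows "sep a b c e \<longleftrightarrow> (min a b < min c e \<and> min c e < max a b \<and> max a b < max c e)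
     \<or> (min c e < min a b \<and> min a b < max c e \<and> max c e < max a b)"
  using assms unfolding sep_def betw_def by (auto simp: min_def max_def)

lemma tp_dist: assumes d: "distinct [a,b,c,e]"
  shows "kuiper_dist (tp a b) (tp c e) < 1 \<longleftrightarrow> sep a b c e"
proof -
  define p where "p = min a b"
  define q where "q = max a b"
  define p' where "p' = min c e"
  define q' where "q' = max c e"
  have pq: "p < q" "p' < q'" "p \<noteq> p'" "p \<noteq> q'" "q \<noteq> p'" "q \<noteq> q'"
    using d unfolding p_def q_def p'_def q'_def by (auto simp: min_def max_def)
  define h where "h t = ((if p \<le> t then 1 else 0) + (if q \<le> t then 1 else 0)) / 2
     - ((if p' \<le> t then 1 else 0) + (if q' \<le> t then 1 else (0::real))) / 2" for t
  have k: "kuiper_dist (tp a b) (tp c e) = osc h"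
    unfolding kuiper_osc tp_cdf_mm h_def p_def q_def p'_def q'_def ..
  have hb: "\<bar>h t\<bar> \<le> 1" for t unfolding h_def by auto
  have sc: "sep a b c e \<longleftrightarrow> (p < p' \<and> p' < q \<and> q < q') \<or> (p' < p \<and> p < q' \<and> q' < q)"
    unfolding p_def q_def p'_def q'_def by (rule sep_cases[OF d])
  show ?thesis
  proof
    assume "kuiper_dist (tp a b) (tp c e) < 1"
    then have lt: "osc h < 1" using k by simp
    show "sep a b c e"
    proof (rule ccontr)
      assume ns: "\<not> sep a b c e"
      have "\<exists>s t. h s - h t \<ge> 1"
      proof -
        consider "q < p'" | "q' < p" | "p < p' \<and> q' < q" | "p' < p \<and> q < q'"
          using ns sc pq by (smt (verit))
        then show ?thesis
        proof cases
          case 1 then show ?thesis using pq by (intro exI[of _ q] exI[of _ "p - 1"]) (auto simp: h_def)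
        next
          case 2 then show ?thesis using pq by (intro exI[of _ "p' - 1"] exI[of _ q']) (auto simp: h_def)
        next
          case 3 then show ?thesis using pq by (intro exI[of _ p] exI[of _ q']) (auto simp: h_def)
        next
          case 4 then show ?thesis using pq by (intro exI[of _ q] exI[of _ p']) (auto simp: h_def)
        qed
      qed
      then obtain s t where "h s - h t \<ge> 1" by blast
      then show False using osc_ge_diff[of h 1 s t] hb lt by simp
    qed
  next
    assume "sep a b c e"
    then consider "p < p' \<and> p' < q \<and> q < q'" | "p' < p \<and> p < q' \<and> q' < q" using sc by blast
    then have "osc h \<le> 1/2"
    proof cases
      case 1
      have "0 \<le> h t \<and> h t \<le> 1/2" for t using 1 unfolding h_def by auto
      then show ?thesis using osc_le_range[of 0 h "1/2"] by simp
    next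
      case 2
      have "-1/2 \<le> h t \<and> h t \<le> 0" for t using 2 unfolding h_def by auto
      then show ?thesis using osc_le_range[of "-1/2" h 0] by simp
    qed
    then show "kuiper_dist (tp a b) (tp c e) < 1" using k by simp
  qed
qed



lemma card_le_real: assumes y: "0 \<le> y"
  shows "card {k\<in>{1..n}. real k \<le> y} = min n (nat \<lfloor>y\<rfloor>)"
proof -
  have "{k\<in>{1..n}. real k \<le> y} = {1..min n (nat \<lfloor>y\<rfloor>)}"
  proof (rule set_eqI)
    fix k
    have "real k \<le> y \<longleftrightarrow> of_int (int k) \<le> y" by simp
    also have "\<dots> \<longleftrightarrow> int k \<le> \<lfloor>y\<rfloor>" by (simp only: le_floor_iff)
    also have "\<dots> \<longleftrightarrow> k \<le> nat \<lfloor>y\<rfloor>" using y by (simp add: le_nat_iff)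
    finally have "real k \<le> y \<longleftrightarrow> k \<le> nat \<lfloor>y\<rfloor>" .
    then show "k \<in> {k\<in>{1..n}. real k \<le> y} \<longleftrightarrow> k \<in> {1..min n (nat \<lfloor>y\<rfloor>)}" by auto
  qed
  then show ?thesis by simp
qed

lemma density: assumes M: "real_distribution M" and n: "0 < n"
  shows "\<exists>\<nu>. real_distribution \<nu> \<and> (\<exists>S. finite S \<and> measure \<nu> S = 1) \<and> kuiper_dist M \<nu> \<le> 2 / real n"
proof -
  define x where "x k = qf M (real k / real (n+1))" for k :: nat
  define \<nu> where "\<nu> = fm {1..n} x"
  have ne: "{1..n} \<noteq> {}" using n by auto
  have V: "real_distribution \<nu>" unfolding \<nu>_def by (rule fm_rd) (use ne in auto)
  have full: "measure \<nu> (x ` {1..n}) = 1" unfolding \<nu>_def by (rule fm_full) (use ne in auto)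
  have bound: "\<bar>cdf M t - cdf \<nu> t\<bar> \<le> 1 / real n" for t
  proof -
    define c where "c = cdf M t"
    define y where "y = real (n+1) * c"
    have c01: "0 \<le> c" "c \<le> 1" unfolding c_def using rd_cdf_bounds[OF M] by auto
    have y0: "0 \<le> y" unfolding y_def using c01 by simp
    have set: "{k\<in>{1..n}. x k \<in> {..t}} = {k\<in>{1..n}. real k \<le> y}"
    proof (rule Collect_cong)
      fix k
      show "(k \<in> {1..n} \<and> x k \<in> {..t}) = (k \<in> {1..n} \<and> real k \<le> y)"
      proof (cases "k \<in> {1..n}")
        case True
        then have u: "0 < real k / real (n+1)" "real k / real (n+1) < 1" by auto
        have "x k \<le> t \<longleftrightarrow> real k / real (n+1) \<le> c"
          unfolding x_def c_def by (rule qf_galois[OF M u])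
        also have "\<dots> \<longleftrightarrow> real k \<le> y" unfolding y_def by (simp add: field_simps)
        finally show ?thesis using True by simp
      qed auto
    qed
    define m where "m = min n (nat \<lfloor>y\<rfloor>)"
    have cnu: "cdf \<nu> t = real m / real n"
      unfolding cdf_def \<nu>_def m_def using fm_measure[of "{1..n}" "{..t}" x] set card_le_real[OF y0]
      by simp
    have fl: "real (nat \<lfloor>y\<rfloor>) = of_int \<lfloor>y\<rfloor>" using y0 by simp
    have m1: "real m \<le> y"
    proof -
      have "real m \<le> real (nat \<lfloor>y\<rfloor>)" unfolding m_def by simp
      also have "\<dots> \<le> y" using fl by simp
      finally show ?thesis .
    qed
    have m2: "m \<le> n" unfolding m_def by simp
    have m3: "m = n \<or> y < real m + 1"
    proof (cases "n \<le> nat \<lfloor>y\<rfloor>")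
      case True then show ?thesis unfolding m_def by simp
    next
      case False then have "m = nat \<lfloor>y\<rfloor>" unfolding m_def by simp
      then have "real m = of_int \<lfloor>y\<rfloor>" using fl by simp
      then show ?thesis by linarith
    qed
    have "\<bar>real m - real n * c\<bar> \<le> 1"
    proof -
      have "real m - real n * c \<le> 1" using m1 c01 unfolding y_def by (simp add: algebra_simps)
      moreover have "real n * c - real m \<le> 1"
        using m3
      proof
        assume "m = n"
        moreover have "real n * c \<le> real n" using c01 by (simp add: mult_left_le)
        ultimately show ?thesis by simp
      next
        assume "y < real m + 1" then show ?thesis using c01 unfolding y_def by (simp add: algebra_simps)
      qed
      ultimately show ?thesis by simp
    qed
    moreover have "c - real m / real n = (real n * c - real m) / real n" using n by (simp add: field_simps)
    ultimately have "\<bar>c - real m / real n\<bar> \<le> 1 / real n" using n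
      by (simp add: abs_minus_commute divide_right_mono)
    then show ?thesis unfolding cnu c_def .
  qed
  have "kuiper_dist M \<nu> \<le> 1 / real n - (- (1 / real n))"
    unfolding kuiper_osc
  proof (rule osc_le_range)
    fix t show "- (1 / real n) \<le> cdf M t - cdf \<nu> t \<and> cdf M t - cdf \<nu> t \<le> 1 / real n"
      using bound[of t] unfolding abs_le_iff by linarith
  qed
  then have "kuiper_dist M \<nu> \<le> 2 / real n" by simp
  moreover have "finite (x ` {1..n})" by simp
  ultimately show ?thesis using V full by blast
qed



lemma return_inj: fixes a b :: real assumes "return borel a = return borel b" shows "a = b"
  using measure_return_single[of a a] measure_return_single[of b a] assms by (auto split: if_splits)

locale iso =
  fixes \<phi> :: "real measure \<Rightarrow> real measure"
  assumes into: "\<forall>\<mu>\<in>PR. \<phi> \<mu> \<in> PR" and onto: "\<phi> ` PR = PR"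
    and isom: "\<forall>\<mu>\<in>PR. \<forall>\<nu>\<in>PR. kuiper_dist (\<phi> \<mu>) (\<phi> \<nu>) = kuiper_dist \<mu> \<nu>"
begin

lemma rdphi: "real_distribution \<mu> \<Longrightarrow> real_distribution (\<phi> \<mu>)"
  using into by (simp add: PR_iff)

lemma kphi: "real_distribution \<mu> \<Longrightarrow> real_distribution \<nu> \<Longrightarrow> kuiper_dist (\<phi> \<mu>) (\<phi> \<nu>) = kuiper_dist \<mu> \<nu>"
  using isom by (simp add: PR_iff)

lemma phi_inj: assumes "real_distribution \<mu>" "real_distribution \<nu>" "\<phi> \<mu> = \<phi> \<nu>" shows "\<mu> = \<nu>"
  using kphi[OF assms(1,2)] assms(3) kuiper_self kuiper_eq0[OF assms(1,2)] by simp

lemma preim: assumes "real_distribution \<nu>" obtains \<mu> where "real_distribution \<mu>" "\<phi> \<mu> = \<nu>"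
proof -
  have "\<nu> \<in> \<phi> ` PR" using onto assms by (simp add: PR_iff)
  then show ?thesis using that by (auto simp: PR_iff)
qed

lemma QP_phi: assumes M: "real_distribution \<mu>" shows "QP (\<phi> \<mu>) \<longleftrightarrow> QP \<mu>"
proof
  assume Q: "QP (\<phi> \<mu>)"
  show "QP \<mu>" unfolding QP_def
  proof (intro ballI impI)
    fix \<nu> assume nP: "\<nu> \<in> PR" and ne: "\<nu> \<noteq> \<mu>"
    have V: "real_distribution \<nu>" using nP by (simp add: PR_iff)
    have "\<phi> \<nu> \<noteq> \<phi> \<mu>" using phi_inj[OF V M] ne by blast
    moreover have "\<phi> \<nu> \<in> PR" using rdphi[OF V] by (simp add: PR_iff)
    ultimately obtain \<rho>' where r: "\<rho>' \<in> PR" "kuiper_dist (\<phi> \<mu>) \<rho>' = 1" "kuiper_dist (\<phi> \<nu>) \<rho>' < 1"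
      using Q unfolding QP_def by blast
    obtain \<rho> where R: "real_distribution \<rho>" "\<phi> \<rho> = \<rho>'" using preim r(1) by (auto simp: PR_iff)
    show "\<exists>\<rho>\<in>PR. kuiper_dist \<mu> \<rho> = 1 \<and> kuiper_dist \<nu> \<rho> < 1"
      using r R kphi[OF M R(1)] kphi[OF V R(1)] by (auto simp: PR_iff)
  qed
next
  assume Q: "QP \<mu>"
  show "QP (\<phi> \<mu>)" unfolding QP_def
  proof (intro ballI impI)
    fix \<nu>' assume nP: "\<nu>' \<in> PR" and ne: "\<nu>' \<noteq> \<phi> \<mu>"
    obtain \<nu> where V: "real_distribution \<nu>" "\<phi> \<nu> = \<nu>'" using preim nP by (auto simp: PR_iff)
    have "\<nu> \<noteq> \<mu>" using ne V by blast
    moreover have "\<nu> \<in> PR" using V by (simp add: PR_iff)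
    ultimately obtain \<rho> where r: "\<rho> \<in> PR" "kuiper_dist \<mu> \<rho> = 1" "kuiper_dist \<nu> \<rho> < 1"
      using Q unfolding QP_def by blast
    have R: "real_distribution \<rho>" using r by (simp add: PR_iff)
    show "\<exists>\<rho>\<in>PR. kuiper_dist (\<phi> \<mu>) \<rho> = 1 \<and> kuiper_dist \<nu>' \<rho> < 1"
      using r rdphi[OF R] kphi[OF M R] kphi[OF V(1) R] V(2) by (auto simp: PR_iff)
  qed
qed

lemma dirac_iff: "real_distribution \<mu> \<Longrightarrow> isdirac \<mu> \<longleftrightarrow> QP \<mu>"
  using dirac_QP nondirac_notQP unfolding isdirac_def by blast

lemma phi_dirac: "\<exists>b. \<phi> (return borel a) = return borel b"
proof -
  have "QP (\<phi> (return borel a))" using QP_phi[OF rd_return] dirac_QP by simp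
  then have "isdirac (\<phi> (return borel a))" using dirac_iff[OF rdphi[OF rd_return]] by simp
  then show ?thesis unfolding isdirac_def .
qed

definition G :: "real \<Rightarrow> real" where "G a = (SOME b. \<phi> (return borel a) = return borel b)"

lemma phiG: "\<phi> (return borel a) = return borel (G a)"
  unfolding G_def using someI_ex[OF phi_dirac[of a]] .

lemma G_inj: "inj G"
proof (rule injI)
  fix a b assume "G a = G b"
  then have "\<phi> (return borel a) = \<phi> (return borel b)" using phiG by simp
  then have "return borel a = (return borel b :: real measure)" using phi_inj rd_return by blast
  then show "a = b" by (rule return_inj)
qed

lemma G_surj: "surj G"
proof -
  have "b \<in> range G" for b
  proof -
    obtain \<mu> where M: "real_distribution \<mu>" "\<phi> \<mu> = return borel b" using preim[OF rd_return] by blast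
    have "QP \<mu>" using QP_phi[OF M(1)] M(2) dirac_QP by simp
    then obtain a where "\<mu> = return borel a" using dirac_iff[OF M(1)] unfolding isdirac_def by blast
    then have "return borel (G a) = (return borel b :: real measure)" using M(2) phiG by simp
    then show ?thesis using return_inj by blast
  qed
  then show ?thesis by blast
qed

lemma atom: assumes M: "real_distribution \<mu>" shows "measure (\<phi> \<mu>) {G c} = measure \<mu> {c}"
proof -
  have "kuiper_dist (return borel (G c)) (\<phi> \<mu>) = kuiper_dist (return borel c) \<mu>"
    using kphi[OF rd_return M] phiG by simp
  then show ?thesis using kuiper_dirac[OF rdphi[OF M]] kuiper_dirac[OF M] by simp
qed

lemma phi_tp: assumes ab: "a \<noteq> b" shows "\<phi> (tp a b) = tp (G a) (G b)"
proof -
  have Gab: "G a \<noteq> G b" using G_inj ab by (auto dest: injD)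
  show ?thesis
  proof (rule atoms_determine[OF tp_rd rdphi[OF tp_rd], of "{G a, G b}", symmetric])
    show "measure (tp (G a) (G b)) {G a, G b} = 1" by (rule tp_full)
    fix c assume "c \<in> {G a, G b}"
    then consider "c = G a" | "c = G b" by blast
    then show "measure (\<phi> (tp a b)) {c} = measure (tp (G a) (G b)) {c}"
    proof cases
      case 1 then show ?thesis using atom[OF tp_rd, of a b a] tp_single[OF ab] tp_single[OF Gab] by simp
    next
      case 2 then show ?thesis using atom[OF tp_rd, of a b b] tp_single[of b a] tp_single[of "G b" "G a"]
          ab Gab tp_sym[of a b] tp_sym[of "G a" "G b"] by simp
    qed
  qed simp
qed

lemma sepG: assumes d: "distinct [a,b,c,e]" shows "sep a b c e = sep (G a) (G b) (G c) (G e)"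
proof -
  have dG: "distinct [G a, G b, G c, G e]" using d G_inj by (auto dest: injD)
  have "kuiper_dist (tp (G a) (G b)) (tp (G c) (G e)) = kuiper_dist (tp a b) (tp c e)"
    using kphi[OF tp_rd tp_rd, of a b c e] phi_tp d by simp
  then show ?thesis using tp_dist[OF d] tp_dist[OF dG] by simp
qed

sublocale sepmap G
  by unfold_locales (use G_inj G_surj sepG in auto)

lemma G_homeo: "homeomorphism UNIV UNIV (inv G) G"
  by (rule strict_mono_homeo[OF mono_or_anti G_surj])

lemma G_meas: "G \<in> borel_measurable borel"
  using homeo_facts(6)[OF G_homeo] by simp

lemma finite_case: assumes V: "real_distribution \<nu>" and S: "finite S" and full: "measure \<nu> S = 1"
  shows "\<phi> \<nu> = distr \<nu> borel G"
proof -
  interpret real_distribution \<nu> by fact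
  have "measurable \<nu> (borel::real measure) = measurable borel borel" by (rule measurable_cong_sets) simp_all
  then have Gm: "G \<in> measurable \<nu> borel" using G_meas by (simp only:)
  have D: "real_distribution (distr \<nu> borel G)" by (rule rd_distr[OF V G_meas])
  have md: "measure (distr \<nu> borel G) (G ` T) = measure \<nu> T" if "finite T" for T
  proof -
    have "G ` T \<in> sets borel" using that by (simp add: countable_finite sets.countable)
    then have "measure (distr \<nu> borel G) (G ` T) = measure \<nu> (G -` (G ` T) \<inter> space \<nu>)"
      by (rule measure_distr[OF Gm])
    also have "G -` (G ` T) \<inter> space \<nu> = T" using G_inj by (auto dest: injD)
    finally show ?thesis .
  qed
  show ?thesis
  proof (rule atoms_determine[OF D rdphi[OF V], of "G ` S", symmetric])
    show "finite (G ` S)" using S by simp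
    show "measure (distr \<nu> borel G) (G ` S) = 1" using md[OF S] full by simp
    fix c' assume "c' \<in> G ` S"
    then obtain c where c: "c' = G c" by blast
    show "measure (\<phi> \<nu>) {c'} = measure (distr \<nu> borel G) {c'}"
      using atom[OF V, of c] md[of "{c}"] c by simp
  qed
qed

lemma phi_eq: assumes M: "real_distribution \<mu>" shows "\<phi> \<mu> = distr \<mu> borel G"
proof -
  define T where "T \<mu> = distr \<mu> borel G" for \<mu>
  have TR: "real_distribution (T \<mu>)" if "real_distribution \<mu>" for \<mu>
    unfolding T_def by (rule rd_distr[OF that G_meas])
  have kT: "kuiper_dist (T \<mu>) (T \<nu>) = kuiper_dist \<mu> \<nu>" if "real_distribution \<mu>" "real_distribution \<nu>" for \<mu> \<nu>
    unfolding T_def by (rule kuiper_homeo[OF G_homeo that])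
  have PM: "real_distribution (\<phi> \<mu>)" by (rule rdphi[OF M])
  have small: "kuiper_dist (\<phi> \<mu>) (T \<mu>) \<le> 4 / real n" if n: "0 < n" for n
  proof -
    obtain \<nu> S where V: "real_distribution \<nu>" "finite S" "measure \<nu> S = 1" "kuiper_dist \<mu> \<nu> \<le> 2 / real n"
      using density[OF M n] by blast
    have e: "\<phi> \<nu> = T \<nu>" unfolding T_def by (rule finite_case[OF V(1-3)])
    have "kuiper_dist (\<phi> \<mu>) (T \<mu>) \<le> kuiper_dist (\<phi> \<mu>) (\<phi> \<nu>) + kuiper_dist (\<phi> \<nu>) (T \<mu>)"
      by (rule kuiper_triangle[OF PM rdphi[OF V(1)] TR[OF M]])
    also have "\<dots> = kuiper_dist \<mu> \<nu> + kuiper_dist \<nu> \<mu>" using kphi[OF M V(1)] e kT[OF V(1) M] by simp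
    also have "\<dots> = 2 * kuiper_dist \<mu> \<nu>" using kuiper_sym[of \<nu> \<mu>] by simp
    also have "\<dots> \<le> 4 / real n" using V(4) by simp
    finally show ?thesis .
  qed
  have z: "kuiper_dist (\<phi> \<mu>) (T \<mu>) = 0"
  proof (rule ccontr)
    let ?k = "kuiper_dist (\<phi> \<mu>) (T \<mu>)"
    assume "?k \<noteq> 0"
    then have kp: "0 < ?k" using kuiper_nonneg[OF PM TR[OF M]] by simp
    obtain n :: nat where n: "4 / ?k < real n" using reals_Archimedean2 by blast
    then have n0: "0 < n" using kp by (metis divide_pos_pos gr0I less_le_trans of_nat_0 zero_less_numeral less_le)
    have "4 < ?k * real n" using n kp by (simp add: field_simps)
    moreover have "?k * real n \<le> 4" using small[OF n0] n0 by (simp add: field_simps)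
    ultimately show False by simp
  qed
  show ?thesis using kuiper_eq0[OF PM TR[OF M] z] unfolding T_def .
qed

end


theorem theorem1p3:
  shows "(\<forall>\<phi>. (\<forall>\<mu>\<in>borel_prob_measures. \<phi> \<mu> \<in> borel_prob_measures)
            \<and> \<phi> ` borel_prob_measures = borel_prob_measures
            \<and> (\<forall>\<mu>\<in>borel_prob_measures. \<forall>\<nu>\<in>borel_prob_measures.
                  kuiper_dist (\<phi> \<mu>) (\<phi> \<nu>) = kuiper_dist \<mu> \<nu>)
          \<longrightarrow> (\<exists>g g'. homeomorphism UNIV UNIV g g' \<and>
                 (\<forall>\<mu>\<in>borel_prob_measures. \<phi> \<mu> = comp_homeo \<mu> g)))
       \<and> (\<forall>g g'. homeomorphism (UNIV::real set) UNIV g g' \<longrightarrow>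
            (\<forall>\<mu>\<in>borel_prob_measures. comp_homeo \<mu> g \<in> borel_prob_measures)
            \<and> (\<lambda>\<mu>. comp_homeo \<mu> g) ` borel_prob_measures = borel_prob_measures
            \<and> (\<forall>\<mu>\<in>borel_prob_measures. \<forall>\<nu>\<in>borel_prob_measures.
                  kuiper_dist (comp_homeo \<mu> g) (comp_homeo \<nu> g) = kuiper_dist \<mu> \<nu>))"
proof (rule conjI)
  show "\<forall>\<phi>. (\<forall>\<mu>\<in>borel_prob_measures. \<phi> \<mu> \<in> borel_prob_measures)
            \<and> \<phi> ` borel_prob_measures = borel_prob_measures
            \<and> (\<forall>\<mu>\<in>borel_prob_measures. \<forall>\<nu>\<in>borel_prob_measures.
                  kuiper_dist (\<phi> \<mu>) (\<phi> \<nu>) = kuiper_dist \<mu> \<nu>)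
          \<longrightarrow> (\<exists>g g'. homeomorphism UNIV UNIV g g' \<and>
                 (\<forall>\<mu>\<in>borel_prob_measures. \<phi> \<mu> = comp_homeo \<mu> g))"
  proof (intro allI impI)
    fix \<phi> :: "real measure \<Rightarrow> real measure"
    assume h: "(\<forall>\<mu>\<in>borel_prob_measures. \<phi> \<mu> \<in> borel_prob_measures)
            \<and> \<phi> ` borel_prob_measures = borel_prob_measures
            \<and> (\<forall>\<mu>\<in>borel_prob_measures. \<forall>\<nu>\<in>borel_prob_measures.
                  kuiper_dist (\<phi> \<mu>) (\<phi> \<nu>) = kuiper_dist \<mu> \<nu>)"
    interpret I: iso \<phi> using h by unfold_locales auto
    have hom: "homeomorphism UNIV UNIV (inv I.G) I.G" by (rule I.G_homeo)
    have ii: "inv (inv I.G) = I.G" by (rule homeo_facts(1)[OF hom])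
    have "\<forall>\<mu>\<in>borel_prob_measures. \<phi> \<mu> = comp_homeo \<mu> (inv I.G)"
      unfolding comp_homeo_def ii using I.phi_eq by (auto simp: PR_iff)
    then show "\<exists>g g'. homeomorphism UNIV UNIV g g' \<and> (\<forall>\<mu>\<in>borel_prob_measures. \<phi> \<mu> = comp_homeo \<mu> g)"
      using hom by blast
  qed
  show "\<forall>g g'. homeomorphism (UNIV::real set) UNIV g g' \<longrightarrow>
            (\<forall>\<mu>\<in>borel_prob_measures. comp_homeo \<mu> g \<in> borel_prob_measures)
            \<and> (\<lambda>\<mu>. comp_homeo \<mu> g) ` borel_prob_measures = borel_prob_measures
            \<and> (\<forall>\<mu>\<in>borel_prob_measures. \<forall>\<nu>\<in>borel_prob_measures.
                  kuiper_dist (comp_homeo \<mu> g) (comp_homeo \<nu> g) = kuiper_dist \<mu> \<nu>)"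
    using part2 by blast
qed

end
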